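(* Let $R$ be a P$v$MD and let $P$ be a $t$-prime ideal of $R$. The following conditions are equivalent: (i) $P$ is branched; (ii) $P$ is a minimal prime of a principal ideal of $R$; (iii) $P$ is a minimal prime of a finitely generated ideal of $R$; (iv) $P$ is a minimal prime of a $v$-finite divisorial ideal of $R$; (v) $P$ is not the union of the set of prime ideals of $R$ properly contained in $P$.
   Context: $R$ is an integral domain with quotient field $K\neq R$. For nonzero $R$-submodules $A,B$ of $K$, $(A:B)=\{x\in K: xB\subseteq A\}$. For a nonzero fractional ideal $I$, $I_v=(R:(R:I))$ and $I_t=\bigcup\{J_v: J\subseteq I \text{ nonzero finitely generated}\}$. $I$ is divisorial if $I=I_v$ and a $t$-ideal if $I=I_t$; a $v$-finite divisorial ideal is an ideal of the form $J_v$ with $J$ finitely generated. A $t$-prime is a prime $t$-ideal; a $t$-maximal ideal is an ideal maximal among proper $t$-ideals (it is prime). $R$ is a P$v$MD (Prüfer $v$-multiplication domain) if $R_M$ is a valuation domain for every $t$-maximal ideal $M$. A prime ideal $P$ is branched if there exists a $P$-primary ideal different from $P$. *)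

theory Defs
  imports Main
begin

text \<open>Convention: the integral domain R is a subring of a field K (the type 'a)
  whose quotient field is K. All fractional ideals live in K.\<close>

definition subring :: "'a::field set \<Rightarrow> bool" where
  "subring R \<longleftrightarrow> 0 \<in> R \<and> 1 \<in> R \<and> (\<forall>x\<in>R. \<forall>y\<in>R. x + y \<in> R \<and> x - y \<in> R \<and> x * y \<in> R)"

definition quotient_field_is_UNIV :: "'a::field set \<Rightarrow> bool" where
  "quotient_field_is_UNIV R \<longleftrightarrow> (\<forall>x. \<exists>a\<in>R. \<exists>b\<in>R. b \<noteq> 0 \<and> x = a / b)"

definition submod :: "'a::field set \<Rightarrow> 'a set \<Rightarrow> bool" where
  "submod R A \<longleftrightarrow> 0 \<in> A \<and> (\<forall>x\<in>A. \<forall>y\<in>A. x + y \<in> A) \<and> (\<forall>r\<in>R. \<forall>x\<in>A. r * x \<in> A)"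

definition fractional_ideal :: "'a::field set \<Rightarrow> 'a set \<Rightarrow> bool" where
  "fractional_ideal R I \<longleftrightarrow> submod R I \<and> I \<noteq> {0} \<and> (\<exists>d\<in>R. d \<noteq> 0 \<and> (\<forall>x\<in>I. d * x \<in> R))"

definition ideal :: "'a::field set \<Rightarrow> 'a set \<Rightarrow> bool" where
  "ideal R I \<longleftrightarrow> I \<subseteq> R \<and> submod R I"

definition prime_ideal :: "'a::field set \<Rightarrow> 'a set \<Rightarrow> bool" where
  "prime_ideal R P \<longleftrightarrow> ideal R P \<and> P \<noteq> R \<and> (\<forall>a\<in>R. \<forall>b\<in>R. a * b \<in> P \<longrightarrow> a \<in> P \<or> b \<in> P)"

definition gen_sub :: "'a::field set \<Rightarrow> 'a set \<Rightarrow> 'a set" where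
  "gen_sub R S = {x. \<exists>T c. finite T \<and> T \<subseteq> S \<and> (\<forall>s\<in>T. c s \<in> R) \<and> x = (\<Sum>s\<in>T. c s * s)}"

definition colon :: "'a::field set \<Rightarrow> 'a set \<Rightarrow> 'a set" where
  "colon A B = {x. \<forall>b\<in>B. x * b \<in> A}"

definition v_op :: "'a::field set \<Rightarrow> 'a set \<Rightarrow> 'a set" where
  "v_op R I = colon R (colon R I)"

definition t_op :: "'a::field set \<Rightarrow> 'a set \<Rightarrow> 'a set" where
  "t_op R I = \<Union>{v_op R J | J. \<exists>S. finite S \<and> J = gen_sub R S \<and> J \<noteq> {0} \<and> J \<subseteq> I}"

definition t_ideal :: "'a::field set \<Rightarrow> 'a set \<Rightarrow> bool" where
  "t_ideal R I \<longleftrightarrow> fractional_ideal R I \<and> t_op R I = I"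

definition t_prime :: "'a::field set \<Rightarrow> 'a set \<Rightarrow> bool" where
  "t_prime R P \<longleftrightarrow> prime_ideal R P \<and> t_ideal R P"

definition t_maximal :: "'a::field set \<Rightarrow> 'a set \<Rightarrow> bool" where
  "t_maximal R M \<longleftrightarrow> ideal R M \<and> M \<noteq> R \<and> t_ideal R M \<and>
     (\<forall>N. ideal R N \<and> N \<noteq> R \<and> t_ideal R N \<and> M \<subseteq> N \<longrightarrow> N = M)"

definition localization :: "'a::field set \<Rightarrow> 'a set \<Rightarrow> 'a set" where
  "localization R M = {a / s | a s. a \<in> R \<and> s \<in> R \<and> s \<notin> M}"

definition valuation_domain :: "'a::field set \<Rightarrow> bool" where
  "valuation_domain V \<longleftrightarrow> (\<forall>x. x \<noteq> 0 \<longrightarrow> x \<in> V \<or> inverse x \<in> V)"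

definition PvMD :: "'a::field set \<Rightarrow> bool" where
  "PvMD R \<longleftrightarrow> (\<forall>M. t_maximal R M \<longrightarrow> valuation_domain (localization R M))"

definition radical :: "'a::field set \<Rightarrow> 'a set \<Rightarrow> 'a set" where
  "radical R Q = {x\<in>R. \<exists>n::nat. x ^ n \<in> Q}"

definition primary_ideal :: "'a::field set \<Rightarrow> 'a set \<Rightarrow> bool" where
  "primary_ideal R Q \<longleftrightarrow> ideal R Q \<and> Q \<noteq> R \<and>
     (\<forall>a\<in>R. \<forall>b\<in>R. a * b \<in> Q \<longrightarrow> a \<in> Q \<or> (\<exists>n::nat. b ^ n \<in> Q))"

definition branched :: "'a::field set \<Rightarrow> 'a set \<Rightarrow> bool" where
  "branched R P \<longleftrightarrow> (\<exists>Q. primary_ideal R Q \<and> radical R Q = P \<and> Q \<noteq> P)"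

definition minimal_prime_of :: "'a::field set \<Rightarrow> 'a set \<Rightarrow> 'a set \<Rightarrow> bool" where
  "minimal_prime_of R P I \<longleftrightarrow> prime_ideal R P \<and> I \<subseteq> P \<and>
     (\<forall>Q. prime_ideal R Q \<and> I \<subseteq> Q \<and> Q \<subseteq> P \<longrightarrow> Q = P)"

end

theory Submission
  imports Defs
begin

lemma sr0: "subring R \<Longrightarrow> 0 \<in> R" and sr1: "subring R \<Longrightarrow> 1 \<in> R"
  and sradd: "subring R \<Longrightarrow> x \<in> R \<Longrightarrow> y \<in> R \<Longrightarrow> x + y \<in> R"
  and srdiff: "subring R \<Longrightarrow> x \<in> R \<Longrightarrow> y \<in> R \<Longrightarrow> x - y \<in> R"
  and srmult: "subring R \<Longrightarrow> x \<in> R \<Longrightarrow> y \<in> R \<Longrightarrow> x * y \<in> R"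
  by (auto simp: subring_def)

lemma srpow: "subring R \<Longrightarrow> x \<in> R \<Longrightarrow> x ^ n \<in> R"
  by (induction n) (auto intro: sr1 srmult)

lemma submod_sum: assumes "submod R A" "finite T" "\<And>s. s \<in> T \<Longrightarrow> f s \<in> A" shows "sum f T \<in> A"
  using assms(2,3)
proof (induction T rule: finite_induct)
  case empty then show ?case using assms(1) by (simp add: submod_def)
next
  case (insert x F) then show ?case using assms(1) by (simp add: submod_def)
qed

lemma subring_submod: "subring R \<Longrightarrow> submod R R"
  by (auto simp: subring_def submod_def)

lemma gen_sub_subset: assumes "submod R A" "S \<subseteq> A" shows "gen_sub R S \<subseteq> A"
proof
  fix x assume "x \<in> gen_sub R S"
  then obtain T c where T: "finite T" "T \<subseteq> S" "\<forall>s\<in>T. c s \<in> R" "x = (\<Sum>s\<in>T. c s * s)"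
    by (auto simp: gen_sub_def)
  show "x \<in> A" unfolding T(4)
    by (rule submod_sum[OF assms(1) T(1)]) (use T assms in \<open>auto simp: submod_def\<close>)
qed

lemma gen_sub_incl: assumes "subring R" "s \<in> S" shows "s \<in> gen_sub R S"
  unfolding gen_sub_def
  by (rule CollectI, rule exI[of _ "{s}"], rule exI[of _ "\<lambda>_. 1"]) (use assms sr1 in auto)

lemma gen_sub_zero: assumes "S \<subseteq> {0}" shows "gen_sub R S = {0}"
proof -
  have "gen_sub R S \<subseteq> {0}"
  proof
    fix x assume "x \<in> gen_sub R S"
    then obtain T c where T: "finite T" "T \<subseteq> S" "x = (\<Sum>s\<in>T. c s * s)"
      by (auto simp: gen_sub_def)
    then show "x \<in> {0}" using assms by (auto intro!: sum.neutral)
  qed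
  moreover have "0 \<in> gen_sub R S" unfolding gen_sub_def
    by (rule CollectI, rule exI[of _ "{}"]) auto
  ultimately show ?thesis by blast
qed

lemma colon_submod: assumes "subring R" shows "submod R (colon R B)"
  using assms unfolding submod_def colon_def subring_def
  by (auto simp: distrib_right mult.assoc)

lemma v_op_submod: "subring R \<Longrightarrow> submod R (v_op R I)"
  unfolding v_op_def by (rule colon_submod)

lemma v_op_incl: "I \<subseteq> v_op R I"
  unfolding v_op_def colon_def by (auto simp: mult.commute)

lemma ideal_mult: "ideal R I \<Longrightarrow> r \<in> R \<Longrightarrow> x \<in> I \<Longrightarrow> r * x \<in> I"
  and ideal_add: "ideal R I \<Longrightarrow> x \<in> I \<Longrightarrow> y \<in> I \<Longrightarrow> x + y \<in> I"
  and ideal_0: "ideal R I \<Longrightarrow> 0 \<in> I"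
  and ideal_sub: "ideal R I \<Longrightarrow> I \<subseteq> R"
  by (auto simp: ideal_def submod_def)

lemma ideal_one: assumes "ideal R I" "1 \<in> I" shows "I = R"
proof -
  have "r \<in> I" if "r \<in> R" for r using ideal_mult[OF assms(1) that assms(2)] by simp
  then show ?thesis using ideal_sub[OF assms(1)] by blast
qed

lemma prime_not1: "prime_ideal R P \<Longrightarrow> 1 \<notin> P"
  using ideal_one by (auto simp: prime_ideal_def)

lemma prime_ideal: "prime_ideal R P \<Longrightarrow> ideal R P"
  by (simp add: prime_ideal_def)

lemma prime_mult: "prime_ideal R P \<Longrightarrow> a \<in> R \<Longrightarrow> b \<in> R \<Longrightarrow> a * b \<in> P \<Longrightarrow> a \<in> P \<or> b \<in> P"
  by (simp add: prime_ideal_def)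

lemma prime_pow: assumes "prime_ideal R P" "subring R" "x \<in> R" "x ^ n \<in> P" shows "x \<in> P"
  using assms(4)
proof (induction n)
  case 0 then show ?case using prime_not1[OF assms(1)] by simp
next
  case (Suc n)
  then show ?case using prime_mult[OF assms(1) assms(3) srpow[OF assms(2,3)]] by auto
qed

lemma prime_zero: assumes "subring R" shows "prime_ideal R {0}"
  using assms unfolding prime_ideal_def ideal_def submod_def
  using sr0 sr1 by fastforce

lemma locE: assumes "z \<in> localization R P"
  obtains a s where "a \<in> R" "s \<in> R" "s \<notin> P" "z = a / s"
  using assms by (auto simp: localization_def)

lemma locI: "a \<in> R \<Longrightarrow> s \<in> R \<Longrightarrow> s \<notin> P \<Longrightarrow> a / s \<in> localization R P"
  by (auto simp: localization_def)

lemma notP_nz: "prime_ideal R P \<Longrightarrow> s \<notin> P \<Longrightarrow> s \<noteq> 0"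
  using ideal_0 prime_ideal by blast

lemma prime_notin_mult: "prime_ideal R P \<Longrightarrow> s \<in> R \<Longrightarrow> t \<in> R \<Longrightarrow> s \<notin> P \<Longrightarrow> t \<notin> P \<Longrightarrow> s * t \<notin> P"
  using prime_mult by blast

lemma loc_R: assumes "subring R" "prime_ideal R P" "r \<in> R" shows "r \<in> localization R P"
  using locI[OF assms(3) sr1[OF assms(1)], of P] prime_not1[OF assms(2)] by simp

lemma loc_mult: assumes "subring R" "prime_ideal R P" "x \<in> localization R P" "y \<in> localization R P"
  shows "x * y \<in> localization R P"
proof -
  obtain a s where 1: "a \<in> R" "s \<in> R" "s \<notin> P" "x = a / s" using assms(3) by (rule locE)
  obtain b t where 2: "b \<in> R" "t \<in> R" "t \<notin> P" "y = b / t" using assms(4) by (rule locE)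
  have "x * y = (a*b) / (s*t)" using 1 2 by simp
  then show ?thesis using locI[of "a*b" R "s*t" P] 1 2 srmult[OF assms(1)] prime_notin_mult[OF assms(2)] by auto
qed

lemma loc_add: assumes "subring R" "prime_ideal R P" "x \<in> localization R P" "y \<in> localization R P"
  shows "x + y \<in> localization R P"
proof -
  obtain a s where 1: "a \<in> R" "s \<in> R" "s \<notin> P" "x = a / s" using assms(3) by (rule locE)
  obtain b t where 2: "b \<in> R" "t \<in> R" "t \<notin> P" "y = b / t" using assms(4) by (rule locE)
  have "s \<noteq> 0" "t \<noteq> 0" using 1 2 notP_nz[OF assms(2)] by auto
  then have "x + y = (a*t + b*s) / (s*t)" using 1 2 by (simp add: field_simps)
  then show ?thesis using locI[of "a*t + b*s" R "s*t" P] 1 2 srmult[OF assms(1)] sradd[OF assms(1)]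
      prime_notin_mult[OF assms(2)] by auto
qed

lemma loc_inv: assumes "subring R" "prime_ideal R P" "s \<in> R" "s \<notin> P" shows "1 / s \<in> localization R P"
  using locI[OF sr1[OF assms(1)] assms(3,4)] .

lemma loc_prime: assumes "subring R" "prime_ideal R P" "prime_ideal R Q" "Q \<subseteq> P"
  "z \<in> Q" "y \<in> R" "v \<in> localization R P" "y = z * v"
  shows "y \<in> Q"
proof -
  obtain a s where 1: "a \<in> R" "s \<in> R" "s \<notin> P" "v = a / s" using assms(7) by (rule locE)
  have "s \<noteq> 0" using 1 notP_nz[OF assms(2)] by auto
  then have "y * s = a * z" using 1 assms(8) by simp
  moreover have "a * z \<in> Q" using ideal_mult[OF prime_ideal[OF assms(3)] 1(1) assms(5)] .
  ultimately have "y * s \<in> Q" by simp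
  then show ?thesis using prime_mult[OF assms(3) assms(6) 1(2)] 1(3) assms(4) by auto
qed

lemma loc_inv_P: assumes "subring R" "prime_ideal R P" "x \<in> P" "x \<noteq> 0"
  shows "1 / x \<notin> localization R P"
proof
  assume "1 / x \<in> localization R P"
  then have "1 \<in> P" using loc_prime[OF assms(1,2,2) order.refl assms(3) sr1[OF assms(1)], of "1/x"] assms(4) by simp
  then show False using prime_not1[OF assms(2)] by simp
qed

lemma t_op_sup: assumes "subring R" "submod R I" "y \<in> I" "y \<noteq> 0" shows "I \<subseteq> t_op R I"
proof
  fix x assume x: "x \<in> I"
  let ?J = "gen_sub R {x, y}"
  have "?J \<subseteq> I" using gen_sub_subset[OF assms(2)] x assms(3) by auto
  moreover have "y \<in> ?J" "x \<in> ?J" using gen_sub_incl[OF assms(1)] by auto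
  ultimately have H: "\<exists>S. finite S \<and> ?J = gen_sub R S \<and> ?J \<noteq> {0} \<and> ?J \<subseteq> I"
    using assms(4) by (intro exI[of _ "{x, y}"]) auto
  have "v_op R ?J \<subseteq> t_op R I" unfolding t_op_def
    by (rule Union_upper, rule CollectI, rule exI[of _ ?J], rule conjI[OF refl H])
  moreover have "x \<in> v_op R ?J" using v_op_incl \<open>x \<in> ?J\<close> by blast
  ultimately show "x \<in> t_op R I" by blast
qed

lemma chain_finite: assumes "chain\<^sub>\<subseteq> C" "C \<noteq> {}" "finite S" "S \<subseteq> \<Union>C" shows "\<exists>X\<in>C. S \<subseteq> X"
  using assms(3,4)
proof (induction S rule: finite_induct)
  case empty then show ?case using assms(2) by auto
next
  case (insert x F)
  then obtain X where X: "X \<in> C" "F \<subseteq> X" by auto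
  obtain Y where Y: "Y \<in> C" "x \<in> Y" using insert(4) by auto
  have "X \<subseteq> Y \<or> Y \<subseteq> X" using assms(1) X(1) Y(1) unfolding chain_subset_def by blast
  then show ?case
  proof
    assume "X \<subseteq> Y" then show ?case using X Y by blast
  next
    assume "Y \<subseteq> X" then show ?case using X Y by blast
  qed
qed

lemma t_ideal_le: assumes "t_ideal R N" "finite S" "gen_sub R S \<noteq> {0}" "gen_sub R S \<subseteq> N"
  shows "v_op R (gen_sub R S) \<subseteq> N"
proof -
  have H: "\<exists>S'. finite S' \<and> gen_sub R S = gen_sub R S' \<and> gen_sub R S \<noteq> {0} \<and> gen_sub R S \<subseteq> N"
    using assms(2-4) by blast
  have "v_op R (gen_sub R S) \<subseteq> t_op R N" unfolding t_op_def
    by (rule Union_upper, rule CollectI, rule exI[of _ "gen_sub R S"], rule conjI[OF refl H])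
  then show ?thesis using assms(1) by (simp add: t_ideal_def)
qed

lemma exists_t_max: assumes "subring R" "t_prime R P" shows "\<exists>M. t_maximal R M \<and> P \<subseteq> M"
proof -
  define A where "A = {N. ideal R N \<and> N \<noteq> R \<and> t_ideal R N \<and> P \<subseteq> N}"
  have PA: "P \<in> A" using assms(2) by (auto simp: A_def t_prime_def prime_ideal_def)
  have Pnz: "P \<noteq> {0}" using assms(2) by (auto simp: t_prime_def t_ideal_def fractional_ideal_def)
  have "\<forall>C\<in>chains A. \<exists>U\<in>A. \<forall>X\<in>C. X \<subseteq> U"
  proof
  fix C assume C: "C \<in> chains A"
  show "\<exists>U\<in>A. \<forall>X\<in>C. X \<subseteq> U"
  proof (cases "C = {}")
    case True then show ?thesis using PA by auto
  next
    case False
    have CA: "C \<subseteq> A" and ch: "chain\<^sub>\<subseteq> C" using C by (auto simp: chains_def)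
    let ?U = "\<Union>C"
    obtain X0 where X0: "X0 \<in> C" using False by auto
    have PU: "P \<subseteq> ?U" using X0 CA by (auto simp: A_def)
    have idl: "\<And>X. X \<in> C \<Longrightarrow> ideal R X" and tX: "\<And>X. X \<in> C \<Longrightarrow> t_ideal R X"
      and neR: "\<And>X. X \<in> C \<Longrightarrow> X \<noteq> R" using CA by (auto simp: A_def)
    have one: "1 \<notin> ?U" using idl neR ideal_one by blast
    have UR: "?U \<subseteq> R" using idl ideal_sub by blast
    have sm: "submod R ?U" unfolding submod_def
    proof (intro conjI ballI)
      show "0 \<in> ?U" using X0 idl ideal_0 by blast
    next
      fix x y assume "x \<in> ?U" "y \<in> ?U"
      then obtain X where "X \<in> C" "x \<in> X" "y \<in> X" using chain_finite[OF ch False, of "{x,y}"] by auto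
      then show "x + y \<in> ?U" using idl ideal_add by blast
    next
      fix r x assume "r \<in> R" "x \<in> ?U"
      then show "r * x \<in> ?U" using idl ideal_mult by blast
    qed
    obtain y where y: "y \<in> P" "y \<noteq> 0" using Pnz PA by (auto simp: A_def ideal_def submod_def)
    have tU: "t_op R ?U = ?U"
    proof
      show "?U \<subseteq> t_op R ?U" using t_op_sup[OF assms(1) sm, of y] y PU by auto
    next
      show "t_op R ?U \<subseteq> ?U"
      proof
        fix x assume "x \<in> t_op R ?U"
        then obtain W where W: "W \<in> {v_op R J | J. \<exists>S. finite S \<and> J = gen_sub R S \<and> J \<noteq> {0} \<and> J \<subseteq> ?U}" "x \<in> W"
          unfolding t_op_def by (rule UnionE)
        from W(1) obtain J S where JS: "W = v_op R J" "finite S" "J = gen_sub R S" "J \<noteq> {0}" "J \<subseteq> ?U"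
          by blast
        have S: "finite S" "gen_sub R S \<noteq> {0}" "gen_sub R S \<subseteq> ?U" "x \<in> v_op R (gen_sub R S)"
          using JS W(2) by simp_all
        have "S \<subseteq> ?U" using S(3) gen_sub_incl[OF assms(1)] by blast
        then obtain X where X: "X \<in> C" "S \<subseteq> X" using chain_finite[OF ch False S(1)] by blast
        have "gen_sub R S \<subseteq> X" using gen_sub_subset[OF _ X(2)] idl[OF X(1)] by (simp add: ideal_def)
        then have "v_op R (gen_sub R S) \<subseteq> X" using t_ideal_le[OF tX[OF X(1)] S(1,2)] by blast
        then show "x \<in> ?U" using S(4) X(1) by blast
      qed
    qed
    have "?U \<in> A" unfolding A_def
    proof (intro CollectI conjI)
      show "ideal R ?U" using UR sm by (simp add: ideal_def)
      show "?U \<noteq> R" using one sr1[OF assms(1)] by blast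
      show "P \<subseteq> ?U" by (rule PU)
      have nz: "?U \<noteq> {0}" using y PU by blast
      have one1: "\<forall>x\<in>?U. 1 * x \<in> R" using UR by auto
      show "t_ideal R ?U" unfolding t_ideal_def fractional_ideal_def
      proof (intro conjI bexI[of _ 1])
        show "submod R ?U" by (rule sm)
        show "t_op R ?U = ?U" by (rule tU)
        show "1 \<in> R" by (rule sr1[OF assms(1)])
      qed (use nz one1 in simp_all)
    qed
    then show ?thesis by blast
  qed
  qed
  from Zorn_Lemma2[OF this] obtain M where M: "M \<in> A" "\<forall>X\<in>A. M \<subseteq> X \<longrightarrow> X = M" by blast
  have MA: "ideal R M" "M \<noteq> R" "t_ideal R M" "P \<subseteq> M" using M(1) unfolding A_def by blast+
  have "\<forall>N. ideal R N \<and> N \<noteq> R \<and> t_ideal R N \<and> M \<subseteq> N \<longrightarrow> N = M"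
  proof (intro allI impI)
    fix N assume N: "ideal R N \<and> N \<noteq> R \<and> t_ideal R N \<and> M \<subseteq> N"
    then have "P \<subseteq> N" using MA(4) by blast
    then have "N \<in> A" using N unfolding A_def by blast
    then show "N = M" using M(2) N by blast
  qed
  then have "t_maximal R M" unfolding t_maximal_def using MA(1-3) by blast
  then show ?thesis using MA(4) by blast
qed

lemma loc_valuation: assumes "subring R" "PvMD R" "t_prime R P"
  shows "\<And>z. z \<noteq> 0 \<Longrightarrow> z \<in> localization R P \<or> 1 / z \<in> localization R P"
proof -
  fix z :: 'a assume z: "z \<noteq> 0"
  obtain M where M: "t_maximal R M" "P \<subseteq> M" using exists_t_max[OF assms(1,3)] by blast
  have sub: "localization R M \<subseteq> localization R P"
  proof
    fix w assume "w \<in> localization R M"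
    then obtain b t where bt: "b \<in> R" "t \<in> R" "t \<notin> M" "w = b / t" by (rule locE)
    then have "t \<notin> P" using M(2) by blast
    then show "w \<in> localization R P" using locI[OF bt(1,2)] bt(4) by simp
  qed
  have "valuation_domain (localization R M)" using assms(2) M(1) unfolding PvMD_def by blast
  then have "z \<in> localization R M \<or> inverse z \<in> localization R M" using z unfolding valuation_domain_def by blast
  then show "z \<in> localization R P \<or> 1 / z \<in> localization R P"
    using sub by (metis inverse_eq_divide subsetD)
qed

definition valn :: "'a::field set \<Rightarrow> bool" where
  "valn V \<longleftrightarrow> (\<forall>z. z \<noteq> 0 \<longrightarrow> z \<in> V \<or> 1 / z \<in> V)"

lemma loc_sq: assumes "subring R" "prime_ideal R P" "valn (localization R P)"
  "w ^ 2 \<in> localization R P" shows "w \<in> localization R P"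
proof (rule ccontr)
  assume w: "w \<notin> localization R P"
  then have "w \<noteq> 0" using loc_R[OF assms(1,2) sr0[OF assms(1)]] by auto
  then have "1 / w \<in> localization R P" using w assms(3) by (auto simp: valn_def)
  then have "w ^ 2 * (1 / w) \<in> localization R P" using loc_mult[OF assms(1,2) assms(4)] by blast
  then show False using w \<open>w \<noteq> 0\<close> by (simp add: power2_eq_square)
qed

lemma v_imp_i: assumes sr: "subring R" and pP: "prime_ideal R P" and val: "valn (localization R P)"
  and Pnz: "P \<noteq> {0}" and aP: "a \<in> P" and amin: "\<And>Q. prime_ideal R Q \<Longrightarrow> Q \<subset> P \<Longrightarrow> a \<notin> Q"
  shows "branched R P"
proof -
  define V where "V = localization R P"
  have PR: "P \<subseteq> R" using ideal_sub[OF prime_ideal[OF pP]] .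
  have aR: "a \<in> R" using aP PR by blast
  have "{0} \<subset> P" using Pnz ideal_0[OF prime_ideal[OF pP]] by blast
  then have anz: "a \<noteq> 0" using amin[OF prime_zero[OF sr]] by blast
  have RV: "\<And>r. r \<in> R \<Longrightarrow> r \<in> V" unfolding V_def using loc_R[OF sr pP] .
  have Vm: "\<And>x y. x \<in> V \<Longrightarrow> y \<in> V \<Longrightarrow> x * y \<in> V" unfolding V_def using loc_mult[OF sr pP] .
  have Va: "\<And>x y. x \<in> V \<Longrightarrow> y \<in> V \<Longrightarrow> x + y \<in> V" unfolding V_def using loc_add[OF sr pP] .
  have Vv: "\<And>z. z \<noteq> 0 \<Longrightarrow> z \<in> V \<or> 1 / z \<in> V" using val unfolding V_def valn_def by blast
  have Vinv: "\<And>x. x \<in> P \<Longrightarrow> x \<noteq> 0 \<Longrightarrow> 1 / x \<notin> V" unfolding V_def using loc_inv_P[OF sr pP] .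
  have VP: "\<And>y z v. z \<in> P \<Longrightarrow> y \<in> R \<Longrightarrow> v \<in> V \<Longrightarrow> y = z * v \<Longrightarrow> y \<in> P"
    unfolding V_def using loc_prime[OF sr pP pP order.refl] by blast
  define Q where "Q = {r \<in> R. r / a^2 \<in> V}"
  have Qid: "ideal R Q" unfolding ideal_def submod_def
  proof (intro conjI ballI)
    show "Q \<subseteq> R" by (auto simp: Q_def)
    show "0 \<in> Q" using sr0[OF sr] RV[OF sr0[OF sr]] by (simp add: Q_def)
  next
    fix x y assume "x \<in> Q" "y \<in> Q"
    then show "x + y \<in> Q" using Va sradd[OF sr] by (auto simp: Q_def add_divide_distrib)
  next
    fix r x assume rx: "r \<in> R" "x \<in> Q"
    have "x / a^2 \<in> V" "x \<in> R" using rx(2) by (auto simp: Q_def)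
    then have "r * (x / a^2) \<in> V" using Vm[OF RV[OF rx(1)]] by blast
    then show "r * x \<in> Q" using srmult[OF sr rx(1) \<open>x \<in> R\<close>] by (simp add: Q_def)
  qed
  have QP: "Q \<subseteq> P"
  proof
    fix r assume r: "r \<in> Q"
    then have "r / a^2 \<in> V" by (simp add: Q_def)
    then have "a * (r / a^2) \<in> V" by (rule Vm[OF RV[OF aR]])
    moreover have "r = a * (a * (r / a^2))" using anz by (simp add: power2_eq_square)
    moreover have "r \<in> R" using r by (simp add: Q_def)
    ultimately show "r \<in> P" using VP[OF aP, of r "a * (r / a^2)"] by blast
  qed
  have aQ: "a \<notin> Q" using Vinv[OF aP anz] anz by (simp add: Q_def power2_eq_square)
  have rad: "\<exists>n. x ^ n \<in> Q" if xP: "x \<in> P" for x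
  proof (rule ccontr)
    assume "\<not> (\<exists>n. x ^ n \<in> Q)"
    then have nq: "\<And>n. x ^ n \<notin> Q" by blast
    have xR: "x \<in> R" using xP PR by blast
    have xnz: "x \<noteq> 0" using nq[of 1] ideal_0[OF Qid] by auto
    have ak: "a^2 / x^k \<in> V" for k
    proof -
      have "x^k / a^2 \<notin> V" using nq[of k] srpow[OF sr xR] by (auto simp: Q_def)
      moreover have "x^k / a^2 \<noteq> 0" using xnz anz by simp
      ultimately show ?thesis using Vv[of "x^k / a^2"] by simp
    qed
    define P2 where "P2 = {y \<in> R. \<forall>n. y / x^n \<in> V}"
    have P2id: "ideal R P2" unfolding ideal_def submod_def
    proof (intro conjI ballI)
      show "P2 \<subseteq> R" by (auto simp: P2_def)
      show "0 \<in> P2" using sr0[OF sr] RV[OF sr0[OF sr]] by (simp add: P2_def)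
    next
      fix y z assume "y \<in> P2" "z \<in> P2"
      then show "y + z \<in> P2" using Va sradd[OF sr] by (auto simp: P2_def add_divide_distrib)
    next
      fix r y assume ry: "r \<in> R" "y \<in> P2"
      have yn: "y / x^n \<in> V" for n using ry(2) by (simp add: P2_def)
      have "r * (y / x^n) \<in> V" for n using Vm[OF RV[OF ry(1)] yn] .
      moreover have "y \<in> R" using ry(2) by (auto simp: P2_def)
      ultimately show "r * y \<in> P2" using srmult[OF sr ry(1)] by (simp add: P2_def)
    qed
    have xP2: "x \<notin> P2"
    proof
      assume "x \<in> P2"
      then have "x / x^2 \<in> V" by (auto simp: P2_def)
      then show False using Vinv[OF xP xnz] xnz by (simp add: power2_eq_square)
    qed
    have P2P: "P2 \<subseteq> P"
    proof
      fix y assume y: "y \<in> P2"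
      then have "y / x^1 \<in> V" "y \<in> R" unfolding P2_def by blast+
      moreover have "y = x * (y / x)" using xnz by simp
      ultimately show "y \<in> P" using VP[OF xP, of y "y / x"] by simp
    qed
    have P2pr: "prime_ideal R P2" unfolding prime_ideal_def
    proof (intro conjI ballI impI)
      show "ideal R P2" by (rule P2id)
      show "P2 \<noteq> R" using xP2 xR by blast
    next
      fix y z assume yz: "y \<in> R" "z \<in> R" "y * z \<in> P2"
      show "y \<in> P2 \<or> z \<in> P2"
      proof (cases "y \<in> P2")
        case True then show ?thesis by blast
      next
        case False
        then obtain m where m: "y / x^m \<notin> V" using yz(1) by (auto simp: P2_def)
        then have ynz: "y \<noteq> 0" using RV[OF sr0[OF sr]] by auto
        then have "1 / (y / x^m) \<in> V" using m Vv[of "y / x^m"] xnz by auto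
        then have xm: "x^m / y \<in> V" by simp
        have "z / x^n \<in> V" for n
        proof -
          have "(y * z) / x^(n+m) \<in> V" using yz(3) by (auto simp: P2_def)
          then have "(y * z) / x^(n+m) * (x^m / y) \<in> V" using Vm xm by blast
          moreover have "(y * z) / x^(n+m) * (x^m / y) = z / x^n" using ynz xnz
            by (simp add: power_add field_simps)
          ultimately show ?thesis by simp
        qed
        then have "z \<in> P2" using yz(2) by (auto simp: P2_def)
        then show ?thesis by blast
      qed
    qed
    have "a \<in> P2"
    proof -
      have "a / x^n \<in> V" for n
      proof -
        have "(a / x^n)^2 = a^2 / x^(2*n)" by (simp add: power_divide power_mult[symmetric] mult.commute)
        then have "(a / x^n)^2 \<in> V" using ak[of "2*n"] by simp
        then show ?thesis using loc_sq[OF sr pP val] unfolding V_def by blast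
      qed
      then show ?thesis using aR by (auto simp: P2_def)
    qed
    moreover have "P2 \<subset> P" using P2P xP2 xP by blast
    ultimately show False using amin[OF P2pr] by blast
  qed
  have primQ: "primary_ideal R Q" unfolding primary_ideal_def
  proof (intro conjI ballI impI)
    show "ideal R Q" by (rule Qid)
    show "Q \<noteq> R" using QP aQ aR aP by blast
  next
    fix r b assume rb: "r \<in> R" "b \<in> R" "r * b \<in> Q"
    show "r \<in> Q \<or> (\<exists>n. b ^ n \<in> Q)"
    proof (rule disjCI)
      assume nex: "\<not> (\<exists>n. b ^ n \<in> Q)"
      then have bP: "b \<notin> P" using rad by blast
      have "(r * b) / a^2 \<in> V" using rb(3) by (auto simp: Q_def)
      moreover have "1 / b \<in> V" unfolding V_def using loc_inv[OF sr pP rb(2) bP] .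
      ultimately have "(r * b) / a^2 * (1 / b) \<in> V" using Vm by blast
      moreover have "b \<noteq> 0" using bP ideal_0[OF prime_ideal[OF pP]] by auto
      ultimately have "r / a^2 \<in> V" by simp
      then show "r \<in> Q" using rb(1) by (simp add: Q_def)
    qed
  qed
  have "radical R Q = P"
  proof
    show "radical R Q \<subseteq> P" using QP prime_pow[OF pP sr] by (auto simp: radical_def)
    show "P \<subseteq> radical R Q" using rad PR by (auto simp: radical_def)
  qed
  then show ?thesis unfolding branched_def using primQ aQ aP by blast
qed

lemma i_imp_v: assumes sr: "subring R" and pP: "prime_ideal R P" and val: "valn (localization R P)"
  and br: "branched R P"
  shows "P \<noteq> \<Union>{Q. prime_ideal R Q \<and> Q \<subset> P}"
proof
  assume eq: "P = \<Union>{Q. prime_ideal R Q \<and> Q \<subset> P}"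
  define V where "V = localization R P"
  obtain Q where Q: "primary_ideal R Q" "radical R Q = P" "Q \<noteq> P" using br by (auto simp: branched_def)
  have Qid: "ideal R Q" using Q(1) by (simp add: primary_ideal_def)
  have QP: "Q \<subseteq> P"
  proof
    fix x assume "x \<in> Q"
    then have "x \<in> R" "x ^ 1 \<in> Q" using ideal_sub[OF Qid] by auto
    then show "x \<in> P" using Q(2) unfolding radical_def by blast
  qed
  obtain p where p: "p \<in> P" "p \<notin> Q" using QP Q(3) by blast
  then obtain Q' where Q': "prime_ideal R Q'" "Q' \<subset> P" "p \<in> Q'" using eq by blast
  obtain q where q: "q \<in> P" "q \<notin> Q'" using Q'(2) by blast
  have PR: "P \<subseteq> R" using ideal_sub[OF prime_ideal[OF pP]] .
  obtain n where n: "q ^ n \<in> Q" using q(1) Q(2) unfolding radical_def by blast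
  have qR: "q \<in> R" "p \<in> R" using q p PR by auto
  have qnQ': "q ^ n \<notin> Q'" using prime_pow[OF Q'(1) sr qR(1)] q(2) by blast
  then have qnz: "q ^ n \<noteq> 0" using ideal_0[OF prime_ideal[OF Q'(1)]] by metis
  have pnz: "p \<noteq> 0" using p(2) ideal_0[OF Qid] by auto
  have "p / q ^ n \<noteq> 0" using pnz qnz by simp
  then have "p / q ^ n \<in> V \<or> 1 / (p / q ^ n) \<in> V" using val[unfolded valn_def] unfolding V_def by blast
  then show False
  proof
    assume "1 / (p / q ^ n) \<in> V"
    then have v: "q ^ n / p \<in> V" by simp
    have "q ^ n = p * (q ^ n / p)" using pnz by simp
    then have "q ^ n \<in> Q'" using loc_prime[OF sr pP Q'(1) _ Q'(3) srpow[OF sr qR(1)] v[unfolded V_def]] Q'(2) by blast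
    then show False using qnQ' by blast
  next
    assume "p / q ^ n \<in> V"
    then obtain b s where bs: "b \<in> R" "s \<in> R" "s \<notin> P" "p / q ^ n = b / s" unfolding V_def by (rule locE)
    have snz: "s \<noteq> 0" using notP_nz[OF pP bs(3)] .
    have "p * s = b * q ^ n" using bs(4) snz qnz by (simp add: field_simps)
    moreover have "b * q ^ n \<in> Q" using ideal_mult[OF Qid bs(1) n] .
    ultimately have "p * s \<in> Q" by simp
    then have "p \<in> Q \<or> (\<exists>m. s ^ m \<in> Q)" using Q(1) qR(2) bs(2) by (simp add: primary_ideal_def)
    moreover have "\<not> (\<exists>m. s ^ m \<in> Q)" using prime_pow[OF pP sr bs(2)] bs(3) QP by blast
    ultimately show False using p(2) by blast
  qed
qed

lemma min_elem: assumes sr: "subring R" and pP: "prime_ideal R P" and val: "valn (localization R P)"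
  and "finite S" "S \<noteq> {}" "0 \<notin> S"
  shows "\<exists>x\<in>S. \<forall>s\<in>S. s / x \<in> localization R P"
  using assms(4-6)
proof (induction S rule: finite_ne_induct)
  case (singleton x)
  then show ?case using loc_R[OF sr pP sr1[OF sr]] by auto
next
  case (insert y F)
  then obtain x where x: "x \<in> F" "\<forall>s\<in>F. s / x \<in> localization R P" by auto
  have ynz: "y \<noteq> 0" "x \<noteq> 0" using insert x by auto
  have yy: "y / y \<in> localization R P" using ynz loc_R[OF sr pP sr1[OF sr]] by simp
  have "y / x \<noteq> 0" using ynz by simp
  then have "y / x \<in> localization R P \<or> 1 / (y / x) \<in> localization R P" using val[unfolded valn_def] by blast
  then show ?case
  proof
    assume "y / x \<in> localization R P"
    then show ?case using x by auto
  next
    assume "1 / (y / x) \<in> localization R P"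
    then have xy: "x / y \<in> localization R P" by simp
    have "s / y \<in> localization R P" if "s \<in> F" for s
    proof -
      have "(s / x) * (x / y) \<in> localization R P" using loc_mult[OF sr pP] x(2) that xy by blast
      then show ?thesis using ynz by simp
    qed
    then show ?case using yy by auto
  qed
qed

lemma denom: assumes sr: "subring R" and pP: "prime_ideal R P"
  and "finite T" "\<forall>s\<in>T. s / x \<in> localization R P"
  shows "\<exists>d\<in>R. d \<notin> P \<and> (\<forall>s\<in>T. d * s / x \<in> R)"
  using assms(3,4)
proof (induction T rule: finite_induct)
  case empty then show ?case using sr1[OF sr] prime_not1[OF pP] by blast
next
  case (insert y F)
  then obtain d where d: "d \<in> R" "d \<notin> P" "\<forall>s\<in>F. d * s / x \<in> R" by auto
  obtain r t where rt: "r \<in> R" "t \<in> R" "t \<notin> P" "y / x = r / t" using insert(4) by (auto elim: locE)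
  have tnz: "t \<noteq> 0" using notP_nz[OF pP rt(3)] .
  have "(d * t) * s / x \<in> R" if "s \<in> F" for s
  proof -
    have e: "(d * t) * s / x = t * (d * s / x)" by simp
    have "t * (d * s / x) \<in> R" using srmult[OF sr rt(2), of "d * s / x"] d(3) that by blast
    then show ?thesis using e by metis
  qed
  moreover have "(d * t) * y / x = d * r"
  proof -
    have "(d * t) * y / x = d * t * (y / x)" by simp
    also have "\<dots> = d * r" using rt(4) tnz by simp
    finally show ?thesis .
  qed
  ultimately show ?case using srmult[OF sr d(1) rt(2)] srmult[OF sr d(1) rt(1)]
      prime_notin_mult[OF pP d(1) rt(2) d(2) rt(3)] by (intro bexI[of _ "d*t"]) auto
qed

lemma iv_imp_v: assumes sr: "subring R" and pP: "prime_ideal R P" and val: "valn (localization R P)"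
  and S: "finite S" "gen_sub R S \<noteq> {0}" and mp: "minimal_prime_of R P (v_op R (gen_sub R S))"
  shows "P \<noteq> \<Union>{Q. prime_ideal R Q \<and> Q \<subset> P}"
proof
  assume eq: "P = \<Union>{Q. prime_ideal R Q \<and> Q \<subset> P}"
  let ?J = "gen_sub R S"
  have JvP: "v_op R ?J \<subseteq> P" using mp by (simp add: minimal_prime_of_def)
  have "S - {0} \<noteq> {}" using gen_sub_zero[of S R] S(2) by blast
  then obtain x where x: "x \<in> S - {0}" "\<forall>s\<in>S - {0}. s / x \<in> localization R P"
    using min_elem[OF sr pP val, of "S - {0}"] S(1) by auto
  have "\<forall>s\<in>S. s / x \<in> localization R P" using x loc_R[OF sr pP sr0[OF sr]] by auto
  then obtain d where d: "d \<in> R" "d \<notin> P" "\<forall>s\<in>S. d * s / x \<in> R" using denom[OF sr pP S(1)] by blast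
  have dcol: "d / x \<in> colon R ?J" unfolding colon_def
  proof (rule CollectI, rule ballI)
    fix j assume "j \<in> ?J"
    then obtain T c where T: "finite T" "T \<subseteq> S" "\<forall>s\<in>T. c s \<in> R" "j = (\<Sum>s\<in>T. c s * s)"
      by (auto simp: gen_sub_def)
    have e: "d / x * j = (\<Sum>s\<in>T. c s * (d * s / x))" unfolding T(4) sum_distrib_left
      by (rule sum.cong) auto
    have "(\<Sum>s\<in>T. c s * (d * s / x)) \<in> R"
    proof (rule submod_sum[OF subring_submod[OF sr] T(1)])
      fix s assume s: "s \<in> T"
      then have "c s \<in> R" "d * s / x \<in> R" using T(2,3) d(3) by auto
      then show "c s * (d * s / x) \<in> R" by (rule srmult[OF sr])
    qed
    then show "d / x * j \<in> R" using e by simp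
  qed
  have "x \<in> P" using gen_sub_incl[OF sr, of x S] x(1) v_op_incl[of ?J R] JvP by blast
  then obtain Q' where Q': "prime_ideal R Q'" "Q' \<subset> P" "x \<in> Q'" using eq by blast
  have "v_op R ?J \<subseteq> Q'"
  proof
    fix y assume y: "y \<in> v_op R ?J"
    then have "\<forall>b\<in>colon R ?J. y * b \<in> R" unfolding v_op_def colon_def by blast
    then have "y * (d / x) \<in> R" using dcol by blast
    have yR: "y \<in> R" using y JvP ideal_sub[OF prime_ideal[OF pP]] by blast
    have "(y * (d / x)) * x \<in> Q'" by (rule ideal_mult[OF prime_ideal[OF Q'(1)] \<open>y * (d / x) \<in> R\<close> Q'(3)])
    then have "x * (y * (d / x)) \<in> Q'" by (simp only: mult.commute)
    moreover have "x * (y * (d / x)) = y * d" using x(1) by simp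
    ultimately have "y * d \<in> Q'" by metis
    then show "y \<in> Q'" using prime_mult[OF Q'(1) yR d(1)] d(2) Q'(2) by blast
  qed
  then have "Q' = P" using mp Q' by (simp add: minimal_prime_of_def)
  then show False using Q'(2) by blast
qed

theorem proposition1p2:
  fixes R :: "'a::field set" and P :: "'a set"
  assumes "subring R" and "quotient_field_is_UNIV R" and "R \<noteq> UNIV"
    and "PvMD R" and "t_prime R P"
  shows "(branched R P \<longleftrightarrow> (\<exists>a\<in>R. minimal_prime_of R P (gen_sub R {a})))
       \<and> (branched R P \<longleftrightarrow> (\<exists>S. finite S \<and> S \<subseteq> R \<and> minimal_prime_of R P (gen_sub R S)))
       \<and> (branched R P \<longleftrightarrow> (\<exists>S. finite S \<and> gen_sub R S \<noteq> {0} \<and> ideal R (v_op R (gen_sub R S))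
                               \<and> minimal_prime_of R P (v_op R (gen_sub R S))))
       \<and> (branched R P \<longleftrightarrow> P \<noteq> \<Union>{Q. prime_ideal R Q \<and> Q \<subset> P})"
proof -
  note sr = assms(1)
  have pP: "prime_ideal R P" using assms(5) by (simp add: t_prime_def)
  have tP: "t_ideal R P" using assms(5) by (simp add: t_prime_def)
  have Pnz: "P \<noteq> {0}" using tP by (simp add: t_ideal_def fractional_ideal_def)
  have val: "valn (localization R P)" unfolding valn_def using loc_valuation[OF sr assms(4,5)] by blast
  have PR: "P \<subseteq> R" using ideal_sub[OF prime_ideal[OF pP]] .
  have Psm: "submod R P" using prime_ideal[OF pP] by (simp add: ideal_def)
  let ?U = "\<Union>{Q. prime_ideal R Q \<and> Q \<subset> P}"
  have iv: "branched R P \<longleftrightarrow> P \<noteq> ?U"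
  proof
    assume "branched R P" then show "P \<noteq> ?U" using i_imp_v[OF sr pP val] by blast
  next
    assume "P \<noteq> ?U"
    then obtain a where "a \<in> P" "\<And>Q. prime_ideal R Q \<Longrightarrow> Q \<subset> P \<Longrightarrow> a \<notin> Q" by blast
    then show "branched R P" using v_imp_i[OF sr pP val Pnz] by blast
  qed
  have v2: "\<exists>a\<in>R. minimal_prime_of R P (gen_sub R {a})" if "P \<noteq> ?U"
  proof -
    obtain a where a: "a \<in> P" "\<And>Q. prime_ideal R Q \<Longrightarrow> Q \<subset> P \<Longrightarrow> a \<notin> Q" using \<open>P \<noteq> ?U\<close> by blast
    have "gen_sub R {a} \<subseteq> P" using gen_sub_subset[OF Psm] a(1) by blast
    moreover have "Q = P" if "prime_ideal R Q" "gen_sub R {a} \<subseteq> Q" "Q \<subseteq> P" for Q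
      using a(2)[OF that(1)] that(2,3) gen_sub_incl[OF sr, of a "{a}"] by blast
    ultimately show ?thesis unfolding minimal_prime_of_def using pP a(1) PR by blast
  qed
  have i23: "\<exists>S. finite S \<and> S \<subseteq> R \<and> minimal_prime_of R P (gen_sub R S)"
    if h23: "\<exists>a\<in>R. minimal_prime_of R P (gen_sub R {a})"
  proof -
    obtain a where "a \<in> R" "minimal_prime_of R P (gen_sub R {a})" using h23 by blast
    then have "finite {a} \<and> {a} \<subseteq> R \<and> minimal_prime_of R P (gen_sub R {a})" by simp
    then show ?thesis by (rule exI[of _ "{a}"])
  qed
  have i34: "\<exists>S. finite S \<and> gen_sub R S \<noteq> {0} \<and> ideal R (v_op R (gen_sub R S))
                               \<and> minimal_prime_of R P (v_op R (gen_sub R S))"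
    if h34: "\<exists>S. finite S \<and> S \<subseteq> R \<and> minimal_prime_of R P (gen_sub R S)"
  proof -
    obtain S where S: "finite S" "minimal_prime_of R P (gen_sub R S)" using h34 by blast
    have JP: "gen_sub R S \<subseteq> P" using S(2) by (simp add: minimal_prime_of_def)
    have Jnz: "gen_sub R S \<noteq> {0}"
    proof
      assume "gen_sub R S = {0}"
      then have "{0} = P" using S(2) prime_zero[OF sr] ideal_0[OF prime_ideal[OF pP]]
        unfolding minimal_prime_of_def by blast
      then show False using Pnz by simp
    qed
    have JvP: "v_op R (gen_sub R S) \<subseteq> P" using t_ideal_le[OF tP S(1) Jnz JP] .
    have "ideal R (v_op R (gen_sub R S))" using JvP PR v_op_submod[OF sr] by (simp add: ideal_def)
    moreover have "minimal_prime_of R P (v_op R (gen_sub R S))"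
      unfolding minimal_prime_of_def
    proof (intro conjI allI impI)
      show "prime_ideal R P" by (rule pP)
      show "v_op R (gen_sub R S) \<subseteq> P" by (rule JvP)
      fix Q assume Q: "prime_ideal R Q \<and> v_op R (gen_sub R S) \<subseteq> Q \<and> Q \<subseteq> P"
      then have "gen_sub R S \<subseteq> Q" using v_op_incl[of "gen_sub R S" R] by blast
      then show "Q = P" using S(2) Q unfolding minimal_prime_of_def by blast
    qed
    ultimately have "finite S \<and> gen_sub R S \<noteq> {0} \<and> ideal R (v_op R (gen_sub R S))
                               \<and> minimal_prime_of R P (v_op R (gen_sub R S))" using S(1) Jnz by blast
    then show ?thesis by (rule exI[of _ S])
  qed
  have i45: "P \<noteq> ?U" if h45: "\<exists>S. finite S \<and> gen_sub R S \<noteq> {0} \<and> ideal R (v_op R (gen_sub R S))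
                               \<and> minimal_prime_of R P (v_op R (gen_sub R S))"
  proof -
    obtain S where "finite S" "gen_sub R S \<noteq> {0}" "minimal_prime_of R P (v_op R (gen_sub R S))"
      using h45 by blast
    then show ?thesis by (rule iv_imp_v[OF sr pP val])
  qed
  let ?B = "branched R P"
  let ?A2 = "\<exists>a\<in>R. minimal_prime_of R P (gen_sub R {a})"
  let ?A3 = "\<exists>S. finite S \<and> S \<subseteq> R \<and> minimal_prime_of R P (gen_sub R S)"
  let ?A4 = "\<exists>S. finite S \<and> gen_sub R S \<noteq> {0} \<and> ideal R (v_op R (gen_sub R S))
                               \<and> minimal_prime_of R P (v_op R (gen_sub R S))"
  have f1: "?B \<Longrightarrow> ?A2" using iv v2 by blast
  have f4: "?A4 \<Longrightarrow> ?B" using iv i45 by blast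
  have e2: "?B \<longleftrightarrow> ?A2" using f1 f4 i34 i23 by blast
  have e3: "?B \<longleftrightarrow> ?A3" using f1 f4 i34 i23 by blast
  have e4: "?B \<longleftrightarrow> ?A4" using f1 f4 i34 i23 by blast
  show ?thesis using e2 e3 e4 iv by (intro conjI)
qed

end
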